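(* Let $\nu$ be an ergodic $S$-invariant probability measure on $X_\eta$ different from the Dirac measure at the all-zero sequence. Then there exist integers $b'_k$, $k\ge1$, with $1<b'_k\mid b_k$ for all $k$ and $\sum_{k\ge1}1/b'_k<\infty$, such that the discrete spectrum of $(S,X_\eta,\nu)$ contains all $b'_1\cdots b'_k$-th roots of unity for every $k\ge1$.
   Context: Let $S$ be the shift on $\{0,1\}^{\mathbb Z}$, $(Sx)(n)=x(n+1)$. Let $\mathscr{B}=\{b_1,b_2,\dots\}\subset\{2,3,\dots\}$ with $\gcd(b_i,b_j)=1$ for $i\ne j$ and $\sum_i1/b_i<\infty$. Define $\eta(n)=1$ iff $b_i\nmid n$ for all $i$ (else $0$), and let $X_\eta$ be the set of $y\in\{0,1\}^{\mathbb Z}$ all of whose finite blocks occur in $\eta$. The discrete spectrum of $(S,X_\eta,\nu)$ is the set of eigenvalues $\lambda$ ($f\circ S=\lambda f$ for some nonzero $f\in L^2(\nu)$). *)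

theory Defs
  imports "HOL-Probability.Probability"
begin

text \<open>The full shift on two symbols, points are functions int => bool
  (True stands for 1, False for 0), with the product sigma algebra
  (which is the Borel sigma algebra of the product topology).\<close>

definition shiftM :: "(int \<Rightarrow> bool) measure" where
  "shiftM = (\<Pi>\<^sub>M n\<in>(UNIV::int set). count_space (UNIV::bool set))"

definition shift :: "(int \<Rightarrow> bool) \<Rightarrow> (int \<Rightarrow> bool)" where
  "shift x = (\<lambda>n. x (n + 1))"

definition eta :: "(nat \<Rightarrow> nat) \<Rightarrow> int \<Rightarrow> bool" where
  "eta b n \<longleftrightarrow> (\<forall>i. \<not> (int (b i) dvd n))"

definition X_eta :: "(nat \<Rightarrow> nat) \<Rightarrow> (int \<Rightarrow> bool) set" where
  "X_eta b = {y. \<forall>m (len::nat). \<exists>t. \<forall>j<len. y (m + int j) = eta b (t + int j)}"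

definition shift_invariant :: "(int \<Rightarrow> bool) measure \<Rightarrow> bool" where
  "shift_invariant \<nu> \<longleftrightarrow> shift \<in> measurable \<nu> \<nu> \<and> distr \<nu> \<nu> shift = \<nu>"

definition shift_ergodic :: "(int \<Rightarrow> bool) measure \<Rightarrow> bool" where
  "shift_ergodic \<nu> \<longleftrightarrow>
     (\<forall>A\<in>sets \<nu>. shift -` A \<inter> space \<nu> = A \<longrightarrow> measure \<nu> A = 0 \<or> measure \<nu> A = 1)"

text \<open>Discrete spectrum: eigenvalues of the Koopman operator on L^2(nu).\<close>
definition discrete_spectrum :: "(int \<Rightarrow> bool) measure \<Rightarrow> complex set" where
  "discrete_spectrum \<nu> = {c. \<exists>f :: (int \<Rightarrow> bool) \<Rightarrow> complex.
      f \<in> borel_measurable \<nu> \<and> integrable \<nu> (\<lambda>x. (cmod (f x))\<^sup>2) \<and>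
      \<not> (AE x in \<nu>. f x = 0) \<and>
      (AE x in \<nu>. f (shift x) = c * f x)}"

end

theory Submission
  imports Defs
begin

definition tr :: "int \<Rightarrow> int \<Rightarrow> int set \<Rightarrow> int set" where
  "tr c t A = (\<lambda>a. (a + t) mod c) ` A"

lemma tr_add: "tr c s (tr c t A) = tr c (t + s) A"
  unfolding tr_def image_image by (rule image_cong) (auto simp: mod_add_left_eq add.assoc)

lemma tr_0: "A \<subseteq> {0..<c} \<Longrightarrow> tr c 0 A = A"
proof -
  assume "A \<subseteq> {0..<c}"
  then have "\<forall>a\<in>A. (a + 0) mod c = a" by auto
  then show ?thesis unfolding tr_def by (simp add: image_cong[of A A _ id])
qed

lemma tr_mod: "tr c (t mod c) A = tr c t A"
  unfolding tr_def by (rule image_cong) (auto simp: mod_add_right_eq)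

lemma tr_sub: "c > 0 \<Longrightarrow> tr c t A \<subseteq> {0..<c}"
  unfolding tr_def by auto

lemma tr_inv: "A \<subseteq> {0..<c} \<Longrightarrow> tr c (-t) (tr c t A) = A"
  by (simp add: tr_add tr_0)

lemma tr_inj: "A \<subseteq> {0..<c} \<Longrightarrow> B \<subseteq> {0..<c} \<Longrightarrow> tr c t A = tr c t B \<Longrightarrow> A = B"
  by (metis tr_inv)

lemma tr_multiple:
  assumes A: "A \<subseteq> {0..<c}" and d: "tr c d A = A"
  shows "tr c (q * d) A = A"
proof -
  have nat: "tr c (int k * d) A = A" for k
  proof (induction k)
    case 0 then show ?case using A by (simp add: tr_0)
  next
    case (Suc k)
    have "tr c (int (Suc k) * d) A = tr c d (tr c (int k * d) A)"
      by (simp add: tr_add algebra_simps)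
    then show ?case using Suc d by simp
  qed
  show ?thesis
  proof (cases "q \<ge> 0")
    case True then show ?thesis using nat[of "nat q"] by simp
  next
    case False
    have "tr c (q * d) A = tr c (q * d) (tr c (int (nat (-q)) * d) A)" using nat[of "nat (-q)"] by simp
    also have "\<dots> = tr c 0 A" using False by (simp add: tr_add algebra_simps)
    finally show ?thesis using A by (simp add: tr_0)
  qed
qed

definition per :: "int \<Rightarrow> int set \<Rightarrow> nat" where
  "per c A = (LEAST d::nat. 0 < d \<and> tr c (int d) A = A)"

lemma tr_c: "A \<subseteq> {0..<c} \<Longrightarrow> tr c c A = A"
  using tr_mod[of c c A] by (simp add: tr_0)

lemma per_ex: assumes "A \<subseteq> {0..<c}" "c > 0" shows "0 < per c A \<and> tr c (int (per c A)) A = A"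
  unfolding per_def by (rule LeastI[of _ "nat c"]) (use assms tr_c in auto)

lemma per_le: assumes "A \<subseteq> {0..<c}" "c > 0" shows "per c A \<le> nat c"
  unfolding per_def by (rule Least_le) (use assms tr_c in auto)

lemma stab_iff:
  assumes A: "A \<subseteq> {0..<c}" and c: "c > 0"
  shows "tr c t A = A \<longleftrightarrow> int (per c A) dvd t"
proof
  define p where "p = per c A"
  have p: "0 < p" "tr c (int p) A = A" using per_ex[OF A c] p_def by auto
  assume h: "tr c t A = A"
  define r where "r = t mod int p"
  have t: "t = (t div int p) * int p + r" unfolding r_def by simp
  have "tr c r A = tr c r (tr c ((t div int p) * int p) A)"
    using tr_multiple[OF A p(2)] by simp
  also have "\<dots> = tr c t A" by (subst t) (simp add: tr_add algebra_simps)
  finally have r: "tr c (int (nat r)) A = A" using h p(1) by (simp add: r_def)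
  have "nat r = 0"
  proof (rule ccontr)
    assume "nat r \<noteq> 0"
    then have "r > 0" by simp
    then have "per c A \<le> nat r" unfolding per_def by (intro Least_le) (use r in auto)
    then have "int (per c A) \<le> r" using \<open>r > 0\<close> by simp
    moreover have "r < int p" unfolding r_def using p(1) by simp
    ultimately show False unfolding p_def by linarith
  qed
  then have "r = 0" using p(1) unfolding r_def by (simp add: nat_eq_iff)
  then show "int (per c A) dvd t" unfolding r_def p_def by auto
next
  assume "int (per c A) dvd t"
  then obtain q where "t = q * int (per c A)" by (metis dvd_def mult.commute)
  then show "tr c t A = A" using tr_multiple[OF A, of "int (per c A)" q] per_ex[OF A c] by simp
qed

lemma per_dvd: "A \<subseteq> {0..<c} \<Longrightarrow> c > 0 \<Longrightarrow> int (per c A) dvd c"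
  using stab_iff tr_c by blast

lemma tr_comm: "tr c t (tr c u A) = tr c u (tr c t A)"
  by (simp add: tr_add add.commute)

lemma per_tr: assumes A: "A \<subseteq> {0..<c}" and c: "c > 0" shows "per c (tr c u A) = per c A"
proof -
  have "tr c (int d) (tr c u A) = tr c u A \<longleftrightarrow> tr c (int d) A = A" for d
  proof
    assume "tr c (int d) (tr c u A) = tr c u A"
    then have "tr c u (tr c (int d) A) = tr c u A" by (simp add: tr_comm)
    then show "tr c (int d) A = A" by (rule tr_inj[OF tr_sub[OF c] A])
  qed (simp add: tr_comm)
  then show ?thesis unfolding per_def by simp
qed

definition orb :: "int \<Rightarrow> int set \<Rightarrow> int set set" where
  "orb c A = {B. \<exists>t. B = tr c t A}"

lemma orb_tr: assumes A: "A \<subseteq> {0..<c}" shows "orb c (tr c u A) = orb c A"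
  unfolding orb_def
proof (intro Collect_cong iffI)
  fix B assume "\<exists>t. B = tr c t (tr c u A)" then show "\<exists>t. B = tr c t A" by (auto simp: tr_add)
next
  fix B assume "\<exists>t. B = tr c t A"
  then obtain t where "B = tr c t A" by blast
  then have "B = tr c (t - u) (tr c u A)" by (simp add: tr_add)
  then show "\<exists>t. B = tr c t (tr c u A)" by blast
qed

definition rep :: "int \<Rightarrow> int set \<Rightarrow> int set" where
  "rep c A = (SOME B. B \<in> orb c A)"

lemma rep_tr: "A \<subseteq> {0..<c} \<Longrightarrow> rep c (tr c u A) = rep c A"
  unfolding rep_def by (simp add: orb_tr)

lemma rep_in: "\<exists>t. rep c A = tr c t A"
  if "A \<subseteq> {0..<c}"
proof -
  have "A \<in> orb c A" unfolding orb_def using tr_0[OF that] by auto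
  then have "rep c A \<in> orb c A" unfolding rep_def by (rule someI)
  then show ?thesis unfolding orb_def by auto
qed



lemma rep_sub: "A \<subseteq> {0..<c} \<Longrightarrow> c > 0 \<Longrightarrow> rep c A \<subseteq> {0..<c}"
  using rep_in tr_sub by metis

lemma per_rep: "A \<subseteq> {0..<c} \<Longrightarrow> c > 0 \<Longrightarrow> per c (rep c A) = per c A"
  using rep_in per_tr by metis

definition sh :: "int \<Rightarrow> int set \<Rightarrow> int" where
  "sh c A = (SOME t. 0 \<le> t \<and> t < c \<and> A = tr c t (rep c A))"

lemma sh_spec: assumes A: "A \<subseteq> {0..<c}" and c: "c > 0"
  shows "0 \<le> sh c A \<and> sh c A < c \<and> A = tr c (sh c A) (rep c A)"
proof -
  obtain t where t: "rep c A = tr c t A" using rep_in[OF A] by blast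
  have "A = tr c (-t) (rep c A)" using t tr_inv[OF A] by simp
  then have "A = tr c ((-t) mod c) (rep c A)" by (simp add: tr_mod)
  then have "\<exists>t. 0 \<le> t \<and> t < c \<and> A = tr c t (rep c A)" using c by (intro exI[of _ "(-t) mod c"]) auto
  then show ?thesis unfolding sh_def by (rule someI_ex)
qed

lemma sh_cong: assumes A: "A' \<subseteq> {0..<c}" and c: "c > 0"
  shows "int (per c (tr c 1 A')) dvd (sh c (tr c 1 A') - sh c A' - 1)"
proof -
  define A where "A = tr c 1 A'"
  have As: "A \<subseteq> {0..<c}" unfolding A_def using tr_sub[OF c] .
  define R where "R = rep c A'"
  have RA: "rep c A = R" unfolding A_def R_def using rep_tr[OF A] .
  have Rs: "R \<subseteq> {0..<c}" unfolding R_def using rep_sub[OF A c] .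
  have 1: "A' = tr c (sh c A') R" using sh_spec[OF A c] R_def by simp
  have 2: "A = tr c (sh c A) R" using sh_spec[OF As c] RA by simp
  have "tr c 1 A' = tr c 1 (tr c (sh c A') R)" using arg_cong[OF 1, of "tr c 1"] .
  then have "tr c (sh c A) R = tr c (sh c A' + 1) R" using 2 unfolding A_def by (simp add: tr_add add.commute)
  then have "tr c (- (sh c A' + 1)) (tr c (sh c A) R) = R" using tr_inv[OF Rs, of "sh c A' + 1"] by simp
  then have "tr c (sh c A - sh c A' - 1) R = R" by (simp add: tr_add algebra_simps)
  then have "int (per c R) dvd (sh c A - sh c A' - 1)" using stab_iff[OF Rs c] by blast
  moreover have "per c R = per c A" using per_rep[OF As c] RA by simp
  ultimately show ?thesis unfolding A_def by simp
qed

definition Mset :: "int \<Rightarrow> (int \<Rightarrow> bool) \<Rightarrow> int set" where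
  "Mset c y = {r. 0 \<le> r \<and> r < c \<and> (\<forall>n. n mod c = r \<longrightarrow> \<not> y n)}"

lemma Mset_sub: "Mset c y \<subseteq> {0..<c}" unfolding Mset_def by auto

lemma Mset_shift: assumes c: "c > 0" shows "Mset c y = tr c 1 (Mset c (shift y))"
proof (rule set_eqI iffI)+
  fix r assume r: "r \<in> Mset c y"
  define r' where "r' = (r - 1) mod c"
  have "r' \<in> Mset c (shift y)" unfolding Mset_def shift_def
  proof (intro CollectI conjI allI impI notI)
    show "0 \<le> r'" "r' < c" unfolding r'_def using c by auto
    fix n assume "n mod c = r'" "y (n + 1)"
    moreover have "(n + 1) mod c = r"
    proof -
      have r0: "0 \<le> r" "r < c" using r unfolding Mset_def by auto
      have "(n + 1) mod c = (n mod c + 1) mod c" by (simp add: mod_add_left_eq)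
      also have "\<dots> = ((r - 1) mod c + 1) mod c" using \<open>n mod c = r'\<close> r'_def by simp
      also have "\<dots> = (r - 1 + 1) mod c" by (simp add: mod_add_left_eq)
      also have "\<dots> = r" using r0 by simp
      finally show ?thesis .
    qed
    ultimately show False using r unfolding Mset_def by auto
  qed
  moreover have "r = (r' + 1) mod c" using r unfolding r'_def Mset_def
    by (simp add: mod_add_left_eq)
  ultimately show "r \<in> tr c 1 (Mset c (shift y))" unfolding tr_def by blast
next
  fix r assume "r \<in> tr c 1 (Mset c (shift y))"
  then obtain r' where r': "r' \<in> Mset c (shift y)" and r: "r = (r' + 1) mod c" unfolding tr_def by auto
  show "r \<in> Mset c y" unfolding Mset_def
  proof (intro CollectI conjI allI impI notI)
    show "0 \<le> r" "r < c" using r c by auto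
    fix n assume n: "n mod c = r" "y n"
    have "(n - 1) mod c = r'"
    proof -
      have r0: "0 \<le> r'" "r' < c" using r' unfolding Mset_def by auto
      have "(n - 1) mod c = (n mod c - 1) mod c" by (simp add: mod_diff_left_eq)
      also have "\<dots> = ((r' + 1) mod c - 1) mod c" using n(1) r by simp
      also have "\<dots> = (r' + 1 - 1) mod c" by (simp add: mod_diff_left_eq)
      also have "\<dots> = r'" using r0 by simp
      finally show ?thesis .
    qed
    then have "\<not> y (n - 1 + 1)" using r' unfolding Mset_def shift_def by auto
    then show False using n by simp
  qed
qed

lemma Mset_nonempty:
  assumes y: "y \<in> X_eta b" and c: "c = int (b i)" and b: "b i \<ge> 2"
  shows "Mset c y \<noteq> {}"
proof
  assume e: "Mset c y = {}"
  have "\<forall>r\<in>{0..<c}. \<exists>n. n mod c = r \<and> y n"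
  proof
    fix r assume "r \<in> {0..<c}"
    then have "r \<notin> Mset c y" using e by auto
    then show "\<exists>n. n mod c = r \<and> y n" using \<open>r \<in> {0..<c}\<close> unfolding Mset_def by auto
  qed
  then obtain f where f: "\<And>r. r \<in> {0..<c} \<Longrightarrow> f r mod c = r \<and> y (f r)" by metis
  define L where "L = Max ((\<lambda>r. \<bar>f r\<bar>) ` {0..<c})"
  have L: "\<bar>f r\<bar> \<le> L" if "r \<in> {0..<c}" for r unfolding L_def using that by (intro Max_ge) auto
  obtain t where t: "\<forall>j<nat (2 * L + 1). y (- L + int j) = eta b (t + int j)"
    using y unfolding X_eta_def by blast
  define r where "r = (- (t + L)) mod c"
  have rr: "r \<in> {0..<c}" unfolding r_def using b c by auto
  define j where "j = nat (f r + L)"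
  have jL: "f r + L \<ge> 0" "f r + L < 2 * L + 1" using L[OF rr] by auto
  have jlt: "j < nat (2*L+1)" unfolding j_def using jL by simp
  have ij: "int j = f r + L" unfolding j_def using jL by simp
  have "y (-L + int j) = eta b (t + int j)" using t jlt by blast
  then have "y (f r) = eta b (t + (f r + L))" by (simp add: ij)
  then have et: "eta b (t + f r + L)" using f[OF rr] by (simp add: add.assoc)
  have "f r mod c = (- (t + L)) mod c" using f[OF rr] r_def by simp
  then have "c dvd f r - (- (t + L))" by (simp only: mod_eq_dvd_iff)
  then have "c dvd (t + f r + L)" by (simp add: algebra_simps)
  moreover have "\<not> int (b i) dvd (t + f r + L)" using et unfolding eta_def by blast
  ultimately show False using c by simp
qed

lemma Mset_full: assumes "Mset c y = {0..<c}" "c > 0" shows "\<not> y n"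
proof -
  have "n mod c \<in> Mset c y" using assms by simp
  then show ?thesis unfolding Mset_def by blast
qed

lemma per1_full: assumes A: "A \<subseteq> {0..<c}" and c: "c > 0" and p: "per c A = 1" and ne: "A \<noteq> {}"
  shows "A = {0..<c}"
proof -
  obtain a where a: "a \<in> A" using ne by blast
  have "tr c k A = A" for k using stab_iff[OF A c] p by simp
  show ?thesis
  proof
    show "{0..<c} \<subseteq> A"
    proof
      fix r assume r: "r \<in> {0..<c}"
      have "tr c (r - a) A = A" using stab_iff[OF A c] p by simp
      moreover have "(a + (r - a)) mod c \<in> tr c (r - a) A" unfolding tr_def using a by blast
      ultimately show "r \<in> A" using r by simp
    qed
  qed (rule A)
qed

lemma card_lower: assumes A: "A \<subseteq> {0..<c}" and c: "c > 0" and ne: "A \<noteq> {}"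
  shows "nat c \<le> card A * per c A"
proof -
  define p where "p = per c A"
  have p: "0 < p" "int p dvd c" using per_ex[OF A c] per_dvd[OF A c] p_def by auto
  define q where "q = c div int p"
  have cq: "c = q * int p" unfolding q_def using p by simp
  have q0: "q > 0" using cq c p by (simp add: zero_less_mult_iff)
  obtain a where a: "a \<in> A" using ne by blast
  define g where "g = (\<lambda>j::nat. (a + int j * int p) mod c)"
  have gsub: "g ` {0..<nat q} \<subseteq> A"
  proof
    fix x assume "x \<in> g ` {0..<nat q}"
    then obtain j where x: "x = g j" by auto
    have "tr c (int j * int p) A = A" using stab_iff[OF A c] p_def by simp
    then show "x \<in> A" using a unfolding x g_def tr_def by blast
  qed
  have ginj: "inj_on g {0..<nat q}"
  proof (rule inj_onI)
    fix i j assume i: "i \<in> {0..<nat q}" and j: "j \<in> {0..<nat q}" and e: "g i = g j"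
    then have "(a + int i * int p) mod c = (a + int j * int p) mod c" unfolding g_def by simp
    then have "c dvd (a + int i * int p) - (a + int j * int p)" by (simp add: mod_eq_dvd_iff)
    then have "c dvd (int i - int j) * int p" by (simp add: algebra_simps)
    then have "q dvd (int i - int j)" using cq p by (simp add: mult_dvd_mono mult.commute)
    moreover have "\<bar>int i - int j\<bar> < q" using i j by auto
    ultimately show "i = j"
    proof -
      assume d: "q dvd (int i - int j)" and l: "\<bar>int i - int j\<bar> < q"
      show "i = j"
      proof (rule ccontr)
        assume "i \<noteq> j"
        then have "\<bar>q\<bar> \<le> \<bar>int i - int j\<bar>" using dvd_imp_le_int[OF _ d] by simp
        then show False using l by simp
      qed
    qed
  qed
  have fA: "finite A" using A finite_subset by blast
  have c1: "card (g ` {0..<nat q}) \<le> card A" by (rule card_mono[OF fA gsub])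
  have c2: "card (g ` {0..<nat q}) = nat q" using card_image[OF ginj] by simp
  from c1 c2 have "nat q \<le> card A" by linarith
  then have "nat q * p \<le> card A * p" by simp
  moreover have "nat c = nat q * p" using cq q0 by (simp add: nat_mult_distrib)
  ultimately show ?thesis unfolding p_def by simp
qed



lemma crt2:
  fixes P Q :: int
  assumes P: "P > 0" and Q: "Q > 0" and cop: "coprime P Q" and A: "A \<subseteq> {0..<P}" and S: "S \<subseteq> {0..<Q}"
  shows "card {n\<in>{0..<P*Q}. n mod P \<in> A \<and> n mod Q \<in> S} = card A * card S"
proof -
  define h where "h = (\<lambda>n. (n mod P, n mod Q))"
  have inj: "inj_on h {0..<P*Q}"
  proof (rule inj_onI)
    fix n m assume n: "n \<in> {0..<P*Q}" and m: "m \<in> {0..<P*Q}" and e: "h n = h m"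
    have "P dvd n - m" "Q dvd n - m" using e unfolding h_def by (auto simp: mod_eq_dvd_iff)
    then have "P * Q dvd n - m" using cop by (simp add: divides_mult)
    moreover have "\<bar>n - m\<bar> < P * Q" using n m by auto
    ultimately show "n = m"
    proof -
      assume d: "P * Q dvd n - m" and l: "\<bar>n - m\<bar> < P * Q"
      show "n = m"
      proof (rule ccontr)
        assume "n \<noteq> m"
        then have "\<bar>P * Q\<bar> \<le> \<bar>n - m\<bar>" using dvd_imp_le_int[OF _ d] by simp
        then show False using l by simp
      qed
    qed
  qed
  have sub: "h ` {0..<P*Q} \<subseteq> {0..<P} \<times> {0..<Q}" unfolding h_def using P Q by auto
  have "card (h ` {0..<P*Q}) = card ({0..<P} \<times> {0..<Q})"
    using card_image[OF inj] P Q by (simp add: card_cartesian_product nat_mult_distrib)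
  then have im: "h ` {0..<P*Q} = {0..<P} \<times> {0..<Q}"
    using card_subset_eq[OF _ sub] by simp
  have "{n\<in>{0..<P*Q}. n mod P \<in> A \<and> n mod Q \<in> S} = {n\<in>{0..<P*Q}. h n \<in> A \<times> S}"
    unfolding h_def by auto
  moreover have "bij_betw h {n\<in>{0..<P*Q}. h n \<in> A \<times> S} (A \<times> S)"
    unfolding bij_betw_def
  proof
    show "inj_on h {n \<in> {0..<P * Q}. h n \<in> A \<times> S}" using inj by (rule inj_on_subset) auto
    show "h ` {n \<in> {0..<P * Q}. h n \<in> A \<times> S} = A \<times> S"
    proof
      show "A \<times> S \<subseteq> h ` {n \<in> {0..<P * Q}. h n \<in> A \<times> S}"
      proof
        fix x assume x: "x \<in> A \<times> S"
        then have "x \<in> h ` {0..<P*Q}" using im A S by auto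
        then obtain n where "n \<in> {0..<P*Q}" "x = h n" by auto
        then show "x \<in> h ` {n \<in> {0..<P * Q}. h n \<in> A \<times> S}" using x by (intro image_eqI[of _ _ n]) auto
      qed
    qed auto
  qed
  ultimately show ?thesis by (simp add: bij_betw_same_card card_cartesian_product)
qed

lemma crt:
  fixes bb :: "nat \<Rightarrow> int"
  assumes pos: "\<And>i. bb i > 0" and cop: "\<And>i j. i \<noteq> j \<Longrightarrow> coprime (bb i) (bb j)"
    and S: "\<And>i. S i \<subseteq> {0..<bb i}"
  shows "card {n\<in>{0..<(\<Prod>i<K. bb i)}. \<forall>i<K. n mod bb i \<in> S i} = (\<Prod>i<K. card (S i))"
proof (induction K)
  case 0
  have "{n\<in>{0..<(\<Prod>i<0. bb i)}. \<forall>i<0. n mod bb i \<in> S i} = {0}" by auto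
  then show ?case by simp
next
  case (Suc K)
  define P where "P = (\<Prod>i<K. bb i)"
  define T where "T = {n\<in>{0..<P}. \<forall>i<K. n mod bb i \<in> S i}"
  have P0: "P > 0" unfolding P_def using pos by (simp add: prod_pos)
  have copP: "coprime P (bb K)" unfolding P_def by (rule prod_coprime_left) (use cop in auto)
  have dv: "i < K \<Longrightarrow> bb i dvd P" for i unfolding P_def by (rule dvd_prodI) auto
  have "{n\<in>{0..<(\<Prod>i<Suc K. bb i)}. \<forall>i<Suc K. n mod bb i \<in> S i}
      = {n\<in>{0..<P * bb K}. n mod P \<in> T \<and> n mod bb K \<in> S K}"
  proof -
    have "(\<forall>i<Suc K. n mod bb i \<in> S i) \<longleftrightarrow> (n mod P \<in> T \<and> n mod bb K \<in> S K)" for n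
    proof -
      have "n mod P mod bb i = n mod bb i" if "i < K" for i using dv[OF that] by (simp add: mod_mod_cancel)
      then show ?thesis unfolding T_def using P0 by (auto simp: less_Suc_eq)
    qed
    then show ?thesis unfolding P_def by simp
  qed
  also have "card \<dots> = card T * card (S K)"
    by (rule crt2[OF P0 pos copP _ S]) (auto simp: T_def)
  finally have e: "card {n\<in>{0..<(\<Prod>i<Suc K. bb i)}. \<forall>i<Suc K. n mod bb i \<in> S i} = card T * card (S K)" .
  have "card T = (\<Prod>i<K. card (S i))" using Suc.IH unfolding T_def P_def .
  then show ?case using e by simp
qed



lemma space_shiftM: "space shiftM = UNIV"
  by (simp add: shiftM_def space_PiM)

definition Z :: "(int \<Rightarrow> bool) set" where "Z = {y. \<forall>n. \<not> y n}"

lemma Z_single: "Z = {\<lambda>_. False}" unfolding Z_def by (auto simp: fun_eq_iff)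

locale bfree =
  fixes \<nu> :: "(int \<Rightarrow> bool) measure"
  assumes sets: "sets \<nu> = sets shiftM"
    and prob: "prob_space \<nu>"
    and inv: "shift_invariant \<nu>"
    and erg: "shift_ergodic \<nu>"
    and notdirac: "\<nu> \<noteq> return shiftM (\<lambda>_. False)"
begin

interpretation P: prob_space \<nu> by (rule prob)

lemma space: "space \<nu> = UNIV"
  using sets_eq_imp_space_eq[OF sets] space_shiftM by simp

lemma comp_meas[measurable]: "(\<lambda>y. y n) \<in> measurable \<nu> (count_space UNIV)"
  unfolding shiftM_def
  using sets by (simp add: measurable_cong_sets[OF _ refl, of \<nu> "PiM UNIV (\<lambda>_. count_space UNIV)"] shiftM_def)

lemma ysets: "{y. y n} \<in> sets \<nu>"
proof -
  have "{y \<in> space \<nu>. y n} \<in> sets \<nu>" by measurable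
  then show ?thesis using space by simp
qed

lemma Mset_eq_iff: assumes a: "a \<subseteq> {0..<c}"
  shows "Mset c y = a \<longleftrightarrow> (\<forall>r\<in>{0..<c}. (r \<in> a \<longleftrightarrow> (\<forall>n::int. n mod c = r \<longrightarrow> \<not> y n)))"
proof
  assume "Mset c y = a" then show "\<forall>r\<in>{0..<c}. (r \<in> a \<longleftrightarrow> (\<forall>n::int. n mod c = r \<longrightarrow> \<not> y n))"
    unfolding Mset_def by auto
next
  assume h: "\<forall>r\<in>{0..<c}. (r \<in> a \<longleftrightarrow> (\<forall>n::int. n mod c = r \<longrightarrow> \<not> y n))"
  show "Mset c y = a"
  proof (rule set_eqI)
    fix r show "r \<in> Mset c y \<longleftrightarrow> r \<in> a"
    proof (cases "r \<in> {0..<c}")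
      case True then show ?thesis using h unfolding Mset_def by auto
    next
      case False then show ?thesis using a unfolding Mset_def by auto
    qed
  qed
qed

lemma Mset_meas: assumes c: "c > 0" shows "Mset c \<in> measurable \<nu> (count_space (Pow {0..<c}))"
proof (subst measurable_count_space_eq_countable)
  show "countable (Pow {0..<c})" by (simp add: countable_finite)
  show "Mset c \<in> space \<nu> \<rightarrow> Pow {0..<c} \<and> (\<forall>a\<in>Pow {0..<c}. Mset c -` {a} \<inter> space \<nu> \<in> sets \<nu>)"
  proof (intro conjI ballI)
    show "Mset c \<in> space \<nu> \<rightarrow> Pow {0..<c}" using Mset_sub by auto
    fix a assume a: "a \<in> Pow {0..<c}"
    have a': "a \<subseteq> {0..<c}" using a by simp
    have "Mset c -` {a} \<inter> space \<nu> = {y \<in> space \<nu>. \<forall>r\<in>{0..<c}. (r \<in> a \<longleftrightarrow> (\<forall>n::int. n mod c = r \<longrightarrow> \<not> y n))}"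
    proof (rule set_eqI)
      fix y
      have "y \<in> Mset c -` {a} \<inter> space \<nu> \<longleftrightarrow> Mset c y = a" using space by simp
      also have "\<dots> \<longleftrightarrow> (\<forall>r\<in>{0..<c}. (r \<in> a \<longleftrightarrow> (\<forall>n::int. n mod c = r \<longrightarrow> \<not> y n)))"
        by (rule Mset_eq_iff[OF a'])
      finally show "y \<in> Mset c -` {a} \<inter> space \<nu> \<longleftrightarrow> y \<in> {y \<in> space \<nu>. \<forall>r\<in>{0..<c}. (r \<in> a \<longleftrightarrow> (\<forall>n::int. n mod c = r \<longrightarrow> \<not> y n))}"
        using space by simp
    qed
    also have "\<dots> \<in> sets \<nu>" by measurable
    finally show "Mset c -` {a} \<inter> space \<nu> \<in> sets \<nu>" .
  qed
qed

lemma Mset_fun_meas: assumes c: "c > 0" and g: "\<And>A. g A \<in> space N" shows "(\<lambda>y. g (Mset c y)) \<in> measurable \<nu> N"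
  by (rule measurable_compose[OF Mset_meas[OF c]]) (use g in \<open>auto simp: measurable_count_space_eq1\<close>)

lemma sets_all: "{y. P (Mset c y)} \<in> sets \<nu>" if "c > 0"
proof -
  have "(\<lambda>y. P (Mset c y)) \<in> measurable \<nu> (count_space UNIV)" by (rule Mset_fun_meas[OF that]) auto
  then have "(\<lambda>y. P (Mset c y)) -` {True} \<inter> space \<nu> \<in> sets \<nu>" by (rule measurable_sets) auto
  then show ?thesis using space by (simp add: vimage_def)
qed

lemma inv_measure: assumes A: "A \<in> sets \<nu>" shows "measure \<nu> (shift -` A) = measure \<nu> A"
proof -
  have m: "shift \<in> measurable \<nu> \<nu>" and d: "distr \<nu> \<nu> shift = \<nu>" using inv unfolding shift_invariant_def by auto
  have "measure \<nu> A = measure (distr \<nu> \<nu> shift) A" using d by simp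
  also have "\<dots> = measure \<nu> (shift -` A \<inter> space \<nu>)" by (rule measure_distr[OF m A])
  finally show ?thesis using space by simp
qed

lemma inv_set: "A \<in> sets \<nu> \<Longrightarrow> shift -` A = A \<Longrightarrow> measure \<nu> A = 0 \<or> measure \<nu> A = 1"
  using erg space unfolding shift_ergodic_def by auto

lemma prob_coord: "measure \<nu> {y. y n} = measure \<nu> {y. y 0}"
proof -
  have step: "measure \<nu> {y. y (m + 1)} = measure \<nu> {y. y m}" for m
  proof -
    have "{y. y m} \<in> sets \<nu>" by (rule ysets)
    moreover have "shift -` {y. y m} = {y. y (m + 1)}" unfolding shift_def by auto
    ultimately show ?thesis using inv_measure by metis
  qed
  show ?thesis
  proof (induction n rule: int_induct[where k=0])
    case base then show ?case by simp
  next
    case (step1 i) then show ?case using step[of i] by simp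
  next
    case (step2 i) then show ?case using step[of "i - 1"] by simp
  qed
qed


lemma Z_sets: "Z \<in> sets \<nu>"
proof -
  have "{y \<in> space \<nu>. \<forall>n::int. \<not> y n} \<in> sets \<nu>" by measurable
  then show ?thesis using space unfolding Z_def by simp
qed

lemma Z_zero: "measure \<nu> Z = 0"
proof -
  have "shift -` Z = Z" unfolding Z_def shift_def
    by (auto, metis diff_add_cancel)
  then have "measure \<nu> Z = 0 \<or> measure \<nu> Z = 1" using inv_set Z_sets by auto
  moreover have "measure \<nu> Z \<noteq> 1"
  proof
    assume Z1: "measure \<nu> Z = 1"
    have "\<nu> = return shiftM (\<lambda>_. False)"
    proof (rule measure_eqI)
      show "sets \<nu> = sets (return shiftM (\<lambda>_. False))" using sets by simp
      fix A assume A: "A \<in> sets \<nu>"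
      have A': "A \<in> sets shiftM" using A sets by simp
      show "emeasure \<nu> A = emeasure (return shiftM (\<lambda>_. False)) A"
      proof (cases "(\<lambda>_. False) \<in> A")
        case True
        have "Z \<subseteq> A" using True Z_single by (metis empty_subsetI insert_subset)
        then have "measure \<nu> Z \<le> measure \<nu> A" using A by (intro P.finite_measure_mono)
        then have "measure \<nu> A = 1" using Z1 P.prob_le_1[of A] by simp
        then show ?thesis using True A' P.emeasure_eq_measure by simp
      next
        case False
        have "A \<subseteq> space \<nu> - Z" unfolding Z_single using False space by blast
        then have "measure \<nu> A \<le> measure \<nu> (space \<nu> - Z)" using A Z_sets by (intro P.finite_measure_mono) auto
        also have "\<dots> = 0" using P.prob_compl[OF Z_sets] Z1 by simp
        finally have "measure \<nu> A = 0" using measure_nonneg[of \<nu> A] by linarith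
        then show ?thesis using False A' P.emeasure_eq_measure by simp
      qed
    qed
    then show False using notdirac by simp
  qed
  ultimately show ?thesis by simp
qed

lemma prob_pos: "measure \<nu> {y. y 0} > 0"
proof (rule ccontr)
  assume "\<not> ?thesis"
  then have 0: "measure \<nu> {y. y n} = 0" for n using prob_coord[of n] measure_nonneg[of \<nu> "{y. y 0}"] by simp
  have sn: "{y. y n} \<in> sets \<nu>" for n by (rule ysets)
  have "emeasure \<nu> (\<Union>k. {y. y (int_decode k)}) = 0"
    by (rule emeasure_UN_eq_0) (use 0 sn P.emeasure_eq_measure in auto)
  moreover have "(\<Union>k. {y. y (int_decode k)}) = space \<nu> - Z"
    using space unfolding Z_def by (auto, metis int_encode_inverse)
  ultimately have "measure \<nu> (space \<nu> - Z) = 0" by (simp add: measure_def)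
  then show False using P.prob_compl[OF Z_sets] Z_zero by simp
qed

end


locale bfree2 = bfree +
  fixes b :: "nat \<Rightarrow> nat"
  assumes b_ge2: "\<And>i. b i \<ge> 2"
    and b_cop: "\<And>i j. i \<noteq> j \<Longrightarrow> coprime (b i) (b j)"
    and supp: "emeasure \<nu> (X_eta b) = 1"
begin

interpretation P: prob_space \<nu> by (rule prob)

lemma X_sets: "X_eta b \<in> sets \<nu>" using supp emeasure_notin_sets by fastforce

lemma X_meas: "measure \<nu> (X_eta b) = 1" using supp P.emeasure_eq_measure by simp

lemma cX: "UNIV - X_eta b \<in> sets \<nu>" using sets.compl_sets[OF X_sets] space by simp

lemma X_compl: "measure \<nu> (UNIV - X_eta b) = 0" using P.prob_compl[OF X_sets] X_meas space by simp

abbreviation cc where "cc i \<equiv> int (b i)"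

lemma cc_pos: "cc i > 0" using b_ge2[of i] by simp

definition Ed :: "nat \<Rightarrow> nat \<Rightarrow> (int \<Rightarrow> bool) set" where
  "Ed i d = {y. per (cc i) (Mset (cc i) y) = d}"

lemma Ed_sets: "Ed i d \<in> sets \<nu>" unfolding Ed_def by (rule sets_all[OF cc_pos])

lemma per_shift: "per (cc i) (Mset (cc i) (shift y)) = per (cc i) (Mset (cc i) y)"
  using Mset_shift[OF cc_pos, of i y] per_tr[OF Mset_sub cc_pos] by metis

lemma Ed_inv: "shift -` Ed i d = Ed i d" unfolding Ed_def using per_shift by auto

lemma Ed_ex: "\<exists>d. measure \<nu> (Ed i d) = 1"
proof (rule ccontr)
  assume "\<not> ?thesis"
  then have 0: "measure \<nu> (Ed i d) = 0" for d using inv_set[OF Ed_sets Ed_inv] by blast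
  have "space \<nu> = (\<Union>d\<in>{..nat (cc i)}. Ed i d)"
    unfolding Ed_def using space per_le[OF Mset_sub cc_pos] by auto
  then have "measure \<nu> (space \<nu>) \<le> (\<Sum>d\<in>{..nat (cc i)}. measure \<nu> (Ed i d))"
    using P.finite_measure_subadditive_finite[of "{..nat (cc i)}" "Ed i"] Ed_sets by auto
  then show False using 0 P.prob_space by simp
qed

definition pp :: "nat \<Rightarrow> nat" where "pp i = (SOME d. measure \<nu> (Ed i d) = 1)"

lemma pp_meas: "measure \<nu> (Ed i (pp i)) = 1" unfolding pp_def using Ed_ex by (rule someI_ex)

lemma pp_AE: "AE y in \<nu>. per (cc i) (Mset (cc i) y) = pp i"
  using P.AE_prob_1[OF pp_meas] unfolding Ed_def by simp

lemma Ed1: "measure \<nu> (Ed i 1) = 0"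
proof -
  have "Ed i 1 \<subseteq> Z \<union> (UNIV - X_eta b)"
  proof
    fix y assume y: "y \<in> Ed i 1"
    show "y \<in> Z \<union> (UNIV - X_eta b)"
    proof (cases "y \<in> X_eta b")
      case True
      then have "Mset (cc i) y \<noteq> {}" using Mset_nonempty b_ge2 by blast
      then have "Mset (cc i) y = {0..<cc i}" using per1_full[OF Mset_sub cc_pos] y unfolding Ed_def by auto
      then have "y \<in> Z" unfolding Z_def using Mset_full cc_pos by blast
      then show ?thesis by simp
    qed simp
  qed
  then have "measure \<nu> (Ed i 1) \<le> measure \<nu> (Z \<union> (UNIV - X_eta b))"
    using Z_sets cX by (intro P.finite_measure_mono) auto
  also have "\<dots> \<le> measure \<nu> Z + measure \<nu> (UNIV - X_eta b)"
    using Z_sets cX by (intro measure_Un_le) auto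
  finally have "measure \<nu> (Ed i 1) \<le> 0" using Z_zero X_compl by simp
  then show ?thesis using measure_nonneg[of \<nu> "Ed i 1"] by linarith
qed

lemma pp_gt1: "1 < pp i"
proof -
  have "pp i \<noteq> 1"
  proof
    assume "pp i = 1" then show False using pp_meas[of i] Ed1[of i] by simp
  qed
  moreover have "pp i \<noteq> 0"
  proof
    assume "pp i = 0"
    then have "Ed i (pp i) = {}" unfolding Ed_def using per_ex[OF Mset_sub cc_pos] by auto
    then show False using pp_meas[of i] by simp
  qed
  ultimately show ?thesis by simp
qed

lemma pp_dvd: "pp i dvd b i"
proof -
  have "Ed i (pp i) \<noteq> {}"
  proof
    assume "Ed i (pp i) = {}" then show False using pp_meas[of i] by simp
  qed
  then obtain y where "per (cc i) (Mset (cc i) y) = pp i" unfolding Ed_def by auto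
  then have "int (pp i) dvd cc i" using per_dvd[OF Mset_sub cc_pos] by metis
  then show ?thesis by simp
qed

end


lemma pow_cong: fixes z :: complex assumes "z ^ p = 1" "a mod p = b mod p" shows "z ^ a = z ^ b"
proof -
  have e: "z ^ (p * k) = 1" for k by (simp add: power_mult assms(1))
  have "z ^ a = z ^ (p * (a div p) + a mod p)" by simp
  also have "\<dots> = z ^ (a mod p)" by (simp only: power_add e mult_1)
  also have "\<dots> = z ^ (p * (b div p) + b mod p)" by (simp only: power_add e mult_1 assms(2))
  also have "\<dots> = z ^ b" by simp
  finally show ?thesis .
qed

context bfree2 begin

interpretation P: prob_space \<nu> by (rule prob)

definition Eig :: "complex set" where
  "Eig = {c. \<exists>f. f \<in> borel_measurable \<nu> \<and> (\<forall>x. cmod (f x) = 1) \<and> (AE x in \<nu>. f (shift x) = c * f x)}"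

lemma Eig_spec: "Eig \<subseteq> discrete_spectrum \<nu>"
proof
  fix c assume "c \<in> Eig"
  then obtain f where f: "f \<in> borel_measurable \<nu>" "\<And>x. cmod (f x) = 1" "AE x in \<nu>. f (shift x) = c * f x"
    unfolding Eig_def by blast
  have "\<not> (AE x in \<nu>. f x = 0)"
  proof
    assume "AE x in \<nu>. f x = 0"
    then have "AE x in \<nu>. False" by (rule AE_mp) (intro AE_I2, metis f(2) norm_zero zero_neq_one)
    then show False using P.AE_False by simp
  qed
  moreover have "integrable \<nu> (\<lambda>x. (cmod (f x))\<^sup>2)" using f(2) by simp
  ultimately show "c \<in> discrete_spectrum \<nu>" unfolding discrete_spectrum_def using f by blast
qed

lemma Eig_mult: assumes "a \<in> Eig" "c \<in> Eig" shows "a * c \<in> Eig"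
proof -
  obtain f where f: "f \<in> borel_measurable \<nu>" "\<And>x. cmod (f x) = 1" "AE x in \<nu>. f (shift x) = a * f x"
    using assms(1) unfolding Eig_def by blast
  obtain g where g: "g \<in> borel_measurable \<nu>" "\<And>x. cmod (g x) = 1" "AE x in \<nu>. g (shift x) = c * g x"
    using assms(2) unfolding Eig_def by blast
  have "AE x in \<nu>. (\<lambda>x. f x * g x) (shift x) = (a * c) * (\<lambda>x. f x * g x) x"
    using f(3) g(3) by eventually_elim (simp add: algebra_simps)
  moreover have "(\<lambda>x. f x * g x) \<in> borel_measurable \<nu>" using f g by measurable
  moreover have "\<forall>x. cmod (f x * g x) = 1" using f g by (simp add: norm_mult)
  ultimately show ?thesis unfolding Eig_def by blast
qed

lemma eig_i: assumes w: "w ^ pp i = 1" shows "w \<in> Eig"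
proof -
  define p where "p = pp i"
  define c where "c = cc i"
  have p1: "p > 1" unfolding p_def using pp_gt1 .
  have c: "c > 0" unfolding c_def using cc_pos .
  define z where "z = w ^ (p - 1)"
  have zp: "z ^ p = 1" unfolding z_def using w p_def by (metis power_mult mult.commute power_one)
  have wn: "cmod w = 1" using power_eq_1_iff[OF w] pp_gt1[of i] by auto
  have zn: "cmod z = 1" unfolding z_def by (simp add: norm_power wn)
  have "w * z = w ^ Suc (p - 1)" unfolding z_def by simp
  also have "Suc (p - 1) = p" using p1 by simp
  finally have wz: "w * z = 1" using w p_def by simp
  define g where "g = (\<lambda>A. if per c A = p then z ^ nat (sh c A) else 1)"
  define f where "f = (\<lambda>y. g (Mset c y))"
  have fm: "f \<in> borel_measurable \<nu>" unfolding f_def by (rule Mset_fun_meas[OF c]) auto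
  have fn: "cmod (f x) = 1" for x unfolding f_def g_def by (simp add: norm_power zn)
  have "AE y in \<nu>. f (shift y) = w * f y"
    using pp_AE[of i]
  proof eventually_elim
    fix y assume py: "per (cc i) (Mset (cc i) y) = pp i"
    define A' where "A' = Mset c (shift y)"
    have A': "A' \<subseteq> {0..<c}" unfolding A'_def using Mset_sub .
    have My: "Mset c y = tr c 1 A'" unfolding A'_def using Mset_shift[OF c] .
    have pA: "per c A' = p" using py per_tr[OF A' c] My unfolding p_def c_def by metis
    have pM: "per c (Mset c y) = p" using py unfolding p_def c_def .
    have dv: "int p dvd (sh c (Mset c y) - sh c A' - 1)" using sh_cong[OF A' c] pM My by metis
    have s1: "0 \<le> sh c (Mset c y)" using sh_spec[OF Mset_sub c] by blast
    have s2: "0 \<le> sh c A'" using sh_spec[OF A' c] by blast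
    have "int (nat (sh c (Mset c y))) mod int p = int (nat (sh c A') + 1) mod int p"
      using dv s1 s2 by (simp add: mod_eq_dvd_iff algebra_simps)
    then have "nat (sh c (Mset c y)) mod p = (nat (sh c A') + 1) mod p"
      by (metis of_nat_eq_iff zmod_int)
    then have "z ^ nat (sh c (Mset c y)) = z ^ (nat (sh c A') + 1)" by (rule pow_cong[OF zp])
    then have "f y = z * f (shift y)" unfolding f_def g_def using pM pA A'_def by simp
    then show "f (shift y) = w * f y" using wz by (simp add: mult.assoc[symmetric])
  qed
  then show ?thesis unfolding Eig_def using fm fn by blast
qed

end


lemma root_split:
  fixes z :: complex and a b :: nat
  assumes a: "a > 0" and b: "b > 0" and cop: "coprime a b" and z: "z ^ (a * b) = 1"
  shows "\<exists>x y. z = x * y \<and> x ^ a = 1 \<and> y ^ b = 1"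
proof -
  obtain u y1 where u: "b * u = a * y1 + gcd b a" using bezout_nat[of b a] b by auto
  obtain v y2 where v: "a * v = b * y2 + gcd a b" using bezout_nat[of a b] a by auto
  have g: "gcd a b = 1" "gcd b a = 1" using cop by (auto simp: coprime_iff_gcd_eq_1 gcd.commute)
  define e where "e = b * u + a * v"
  have e1: "e = a * (y1 + v) + 1" unfolding e_def using u g by (simp add: algebra_simps)
  have e2: "e = b * (u + y2) + 1" unfolding e_def using v g by (simp add: algebra_simps)
  have "a dvd e - 1" using e1 by simp
  moreover have "b dvd e - 1" using e2 by simp
  ultimately
  have "a * b dvd e - 1" using cop by (rule divides_mult)
  then obtain k where k: "e - 1 = a * b * k" by (rule dvdE)
  have "e \<ge> 1" using e1 by simp
  then have "e = 1 + a * b * k" using k by simp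
  moreover have "(1 + a * b * k) mod (a * b) = 1 mod (a * b)" by (rule mod_mult_self2)
  ultimately have "e mod (a * b) = 1 mod (a * b)" by (simp only:)
  then have ze: "z ^ e = z" using pow_cong[OF z] by (metis power_one_right)
  have "z = z ^ (b * u) * z ^ (a * v)" using ze unfolding e_def by (simp add: power_add)
  moreover have "(z ^ (b * u)) ^ a = 1" by (metis z power_mult mult.commute mult.left_commute power_one)
  moreover have "(z ^ (a * v)) ^ b = 1" by (metis z power_mult mult.commute mult.left_commute power_one)
  ultimately show ?thesis by blast
qed

context bfree2 begin

interpretation P: prob_space \<nu> by (rule prob)

lemma roots: "z ^ (\<Prod>i\<le>k. pp i) = 1 \<Longrightarrow> z \<in> Eig"
proof (induction k arbitrary: z)
  case 0 then show ?case using eig_i by simp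
next
  case (Suc k)
  have cop: "coprime (\<Prod>i\<le>k. pp i) (pp (Suc k))"
  proof (rule prod_coprime_left)
    fix i assume "i \<in> {..k}"
    then have "coprime (b i) (b (Suc k))" using b_cop by auto
    then show "coprime (pp i) (pp (Suc k))" using pp_dvd coprime_imp_coprime
      by (meson coprime_commute coprime_divisors)
  qed
  have pp0: "pp j > 0" for j using pp_gt1[of j] by simp
  have pos: "(\<Prod>i\<le>k. pp i) > 0" "pp (Suc k) > 0" using pp0 by (auto intro: prod_pos)
  have "z ^ ((\<Prod>i\<le>k. pp i) * pp (Suc k)) = 1" using Suc.prems by (simp add: prod.atMost_Suc)
  then obtain x y where "z = x * y" "x ^ (\<Prod>i\<le>k. pp i) = 1" "y ^ pp (Suc k) = 1"
    using root_split[OF pos cop] by blast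
  then show ?case using Suc.IH eig_i Eig_mult by simp
qed

end


context bfree2 begin

interpretation P: prob_space \<nu> by (rule prob)

lemma pointwise:
  assumes y: "y \<in> X_eta b" and py: "\<forall>i<K. per (cc i) (Mset (cc i) y) = pp i"
  shows "real (card {n\<in>{0..<(\<Prod>i<K. cc i)}. y n}) \<le> real_of_int (\<Prod>i<K. cc i) * (\<Prod>i<K. 1 - 1 / real (pp i))"
proof -
  define S where "S i = {0..<cc i} - Mset (cc i) y" for i
  have "card {n\<in>{0..<(\<Prod>i<K. cc i)}. y n} \<le> card {n\<in>{0..<(\<Prod>i<K. cc i)}. \<forall>i<K. n mod cc i \<in> S i}"
  proof (rule card_mono)
    show "{n \<in> {0..<(\<Prod>i<K. cc i)}. y n} \<subseteq> {n \<in> {0..<(\<Prod>i<K. cc i)}. \<forall>i<K. n mod cc i \<in> S i}"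
      unfolding S_def Mset_def using cc_pos by auto
    show "finite {n \<in> {0..<(\<Prod>i<K. cc i)}. \<forall>i<K. n mod cc i \<in> S i}"
      by (rule finite_subset[OF _ finite_atLeastLessThan_int[of 0 "\<Prod>i<K. cc i"]]) auto
  qed
  also have "\<dots> = (\<Prod>i<K. card (S i))"
    by (rule crt) (use cc_pos b_cop in \<open>auto simp: S_def\<close>)
  finally have 1: "real (card {n\<in>{0..<(\<Prod>i<K. cc i)}. y n}) \<le> (\<Prod>i<K. real (card (S i)))"
    by (simp flip: of_nat_prod)
  have 2: "real (card (S i)) \<le> real_of_int (cc i) * (1 - 1 / real (pp i))" if "i < K" for i
  proof -
    have ne: "Mset (cc i) y \<noteq> {}" using Mset_nonempty y b_ge2 by blast
    have "nat (cc i) \<le> card (Mset (cc i) y) * pp i" using card_lower[OF Mset_sub cc_pos ne] py that by simp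
    then have le: "real_of_int (cc i) \<le> real (card (Mset (cc i) y)) * real (pp i)"
      by (metis nat_int of_nat_le_iff of_nat_mult of_int_of_nat_eq)
    have "card (S i) = card {0..<cc i} - card (Mset (cc i) y)" unfolding S_def
      by (rule card_Diff_subset) (rule finite_subset[OF Mset_sub], simp, rule Mset_sub)
    moreover have "card (Mset (cc i) y) \<le> card {0..<cc i}" by (rule card_mono) (auto simp: Mset_sub)
    ultimately have "real (card (S i)) = real_of_int (cc i) - real (card (Mset (cc i) y))" by simp
    also have "\<dots> \<le> real_of_int (cc i) - real_of_int (cc i) / real (pp i)"
      using le pp_gt1[of i] by (simp add: field_simps)
    finally show ?thesis by (simp add: algebra_simps)
  qed
  have "(\<Prod>i<K. real (card (S i))) \<le> (\<Prod>i<K. real_of_int (cc i) * (1 - 1 / real (pp i)))"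
    by (rule prod_mono) (use 2 in auto)
  also have "\<dots> = real_of_int (\<Prod>i<K. cc i) * (\<Prod>i<K. 1 - 1 / real (pp i))"
    by (simp add: prod.distrib)
  finally show ?thesis using 1 by linarith
qed

lemma bound_K: "measure \<nu> {y. y 0} \<le> (\<Prod>i<K. 1 - 1 / real (pp i))"
proof -
  define N where "N = (\<Prod>i<K. cc i)"
  have N0: "N > 0" unfolding N_def using cc_pos by (simp add: prod_pos)
  define I where "I = {0..<N}"
  have sn: "{y. y n} \<in> sets \<nu>" for n by (rule ysets)
  have int: "integrable \<nu> (indicator {y. y n} :: _ \<Rightarrow> real)" for n
    using sn by (simp add: integrable_indicator_iff P.emeasure_eq_measure)
  have "(\<Sum>n\<in>I. measure \<nu> {y. y n}) = (\<Sum>n\<in>I. measure \<nu> {y. y 0})"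
    by (rule sum.cong[OF refl prob_coord])
  also have "\<dots> = real_of_int N * measure \<nu> {y. y 0}" unfolding I_def using N0 by simp
  finally have "real_of_int N * measure \<nu> {y. y 0} = (\<Sum>n\<in>I. measure \<nu> {y. y n})" by simp
  also have "\<dots> = integral\<^sup>L \<nu> (\<lambda>y. \<Sum>n\<in>I. indicator {y. y n} y)"
    using int space by (simp add: integral_sum)
  also have "\<dots> \<le> integral\<^sup>L \<nu> (\<lambda>y. real_of_int N * (\<Prod>i<K. 1 - 1 / real (pp i)))"
  proof (rule integral_mono_AE)
    show "integrable \<nu> (\<lambda>y. \<Sum>n\<in>I. indicator {y. y n} y :: real)" using int by auto
    show "integrable \<nu> (\<lambda>y. real_of_int N * (\<Prod>i<K. 1 - 1 / real (pp i)))" by simp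
    have "AE y in \<nu>. y \<in> X_eta b" using P.AE_prob_1[OF X_meas] .
    moreover have "AE y in \<nu>. \<forall>i\<in>{..<K}. per (cc i) (Mset (cc i) y) = pp i"
      by (rule eventually_ball_finite) (use pp_AE in auto)
    ultimately show "AE y in \<nu>. (\<Sum>n\<in>I. indicator {y. y n} y) \<le> real_of_int N * (\<Prod>i<K. 1 - 1 / real (pp i))"
    proof eventually_elim
      case (elim y)
      have "(\<Sum>n\<in>I. indicator {y. y n} y :: real) = real (card {n\<in>I. y n})"
        by (simp add: indicator_def sum.If_cases I_def Int_def conj_commute)
      then show ?case using pointwise[of y K] elim unfolding I_def N_def by simp
    qed
  qed
  also have "\<dots> = real_of_int N * (\<Prod>i<K. 1 - 1 / real (pp i))" using P.prob_space by simp
  finally show ?thesis using N0 by simp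
qed

lemma pp_summable: "summable (\<lambda>k. 1 / real (pp k))"
proof (rule summableI_nonneg_bounded)
  show "0 \<le> 1 / real (pp n)" for n by simp
  fix K
  define q where "q = measure \<nu> {y. y 0}"
  have q: "q > 0" unfolding q_def using prob_pos .
  have "q \<le> (\<Prod>i<K. 1 - 1 / real (pp i))" unfolding q_def by (rule bound_K)
  also have "\<dots> \<le> (\<Prod>i<K. exp (- (1 / real (pp i))))"
  proof (rule prod_mono)
    fix i show "0 \<le> 1 - 1 / real (pp i) \<and> 1 - 1 / real (pp i) \<le> exp (- (1 / real (pp i)))"
      using pp_gt1[of i] exp_ge_add_one_self[of "- (1 / real (pp i))"] by auto
  qed
  also have "\<dots> = exp (- (\<Sum>i<K. 1 / real (pp i)))" by (simp add: exp_sum sum_negf[symmetric])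
  finally have "ln q \<le> - (\<Sum>i<K. 1 / real (pp i))" using q by (metis exp_le_cancel_iff exp_ln)
  then show "(\<Sum>i<K. 1 / real (pp i)) \<le> - ln q" by simp
qed

end


theorem mainTheorem11:
  fixes b :: "nat \<Rightarrow> nat" and \<nu> :: "(int \<Rightarrow> bool) measure"
  assumes b_ge2: "\<And>i. b i \<ge> 2"
    and b_coprime: "\<And>i j. i \<noteq> j \<Longrightarrow> coprime (b i) (b j)"
    and b_summable: "summable (\<lambda>i. 1 / real (b i))"
    and \<nu>_sets: "sets \<nu> = sets shiftM"
    and \<nu>_prob: "prob_space \<nu>"
    and \<nu>_supp: "emeasure \<nu> (X_eta b) = 1"
    and \<nu>_inv: "shift_invariant \<nu>"
    and \<nu>_erg: "shift_ergodic \<nu>"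
    and \<nu>_not_dirac: "\<nu> \<noteq> return shiftM (\<lambda>_. False)"
  shows "\<exists>b' :: nat \<Rightarrow> nat. (\<forall>k. 1 < b' k \<and> b' k dvd b k) \<and>
           summable (\<lambda>k. 1 / real (b' k)) \<and>
           (\<forall>k. \<forall>z::complex. z ^ (\<Prod>i\<le>k. b' i) = 1 \<longrightarrow> z \<in> discrete_spectrum \<nu>)"
proof -
  interpret bfree2 \<nu> b
    by (intro bfree2.intro bfree.intro bfree2_axioms.intro) (fact \<nu>_sets \<nu>_prob \<nu>_inv \<nu>_erg \<nu>_not_dirac b_ge2 b_coprime \<nu>_supp)+
  show ?thesis
  proof (intro exI[of _ pp] conjI allI impI)
    show "1 < pp k" for k by (rule pp_gt1)
    show "pp k dvd b k" for k by (rule pp_dvd)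
    show "summable (\<lambda>k. 1 / real (pp k))" by (rule pp_summable)
    fix k and z :: complex assume "z ^ (\<Prod>i\<le>k. pp i) = 1"
    then have "z \<in> Eig" by (rule roots)
    then show "z \<in> discrete_spectrum \<nu>" using Eig_spec by blast
  qed
qed

end
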